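(* Let $M$ be an $m\times n$ matrix over a field with all entries nonzero, where $m<n$. If every maximal ($m\times m$) minor $N$ of $M$ satisfies $\operatorname{crk}N<m$, then $\operatorname{crk}M<m$.
   Context: For a matrix $M$ with nonzero entries, the combinatorial rank $\operatorname{crk}M$ is the minimum of the number of classes of mutually proportional rows of $M$ and the number of classes of mutually proportional columns of $M$. A maximal minor here means the square submatrix formed by some $m$ columns. *)

theory Defs
  imports Main
begin

text \<open>A matrix is represented as a function M :: nat => nat => 'a, restricted to a row
index set R and a column index set C (for an m x n matrix, R = {0..<m}, C = {0..<n};
a maximal minor is obtained by restricting C to a set S of m columns).\<close>

definition rows_prop :: "(nat \<Rightarrow> nat \<Rightarrow> 'a::field) \<Rightarrow> nat set \<Rightarrow> nat \<Rightarrow> nat \<Rightarrow> bool" where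
  "rows_prop M C i i' \<longleftrightarrow> (\<exists>c. \<forall>j\<in>C. M i' j = c * M i j)"

definition cols_prop :: "(nat \<Rightarrow> nat \<Rightarrow> 'a::field) \<Rightarrow> nat set \<Rightarrow> nat \<Rightarrow> nat \<Rightarrow> bool" where
  "cols_prop M R j j' \<longleftrightarrow> (\<exists>c. \<forall>i\<in>R. M i j' = c * M i j)"

definition row_classes :: "(nat \<Rightarrow> nat \<Rightarrow> 'a::field) \<Rightarrow> nat set \<Rightarrow> nat set \<Rightarrow> nat" where
  "row_classes M R C = card {{i'\<in>R. rows_prop M C i i'} | i. i \<in> R}"

definition col_classes :: "(nat \<Rightarrow> nat \<Rightarrow> 'a::field) \<Rightarrow> nat set \<Rightarrow> nat set \<Rightarrow> nat" where
  "col_classes M R C = card {{j'\<in>C. cols_prop M R j j'} | j. j \<in> C}"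

definition crk :: "(nat \<Rightarrow> nat \<Rightarrow> 'a::field) \<Rightarrow> nat set \<Rightarrow> nat set \<Rightarrow> nat" where
  "crk M R C = min (row_classes M R C) (col_classes M R C)"

end

theory Submission
  imports Defs
begin

lemma rp_refl: "rows_prop M C i i"
  unfolding rows_prop_def by (rule exI[of _ 1]) simp

lemma rp_trans: "rows_prop M C a b \<Longrightarrow> rows_prop M C b d \<Longrightarrow> rows_prop M C a d"
  unfolding rows_prop_def
proof -
  assume "\<exists>c. \<forall>j\<in>C. M b j = c * M a j" "\<exists>c. \<forall>j\<in>C. M d j = c * M b j"
  then obtain c e where "\<forall>j\<in>C. M b j = c * M a j" "\<forall>j\<in>C. M d j = e * M b j" by blast
  then have "\<forall>j\<in>C. M d j = (e * c) * M a j" by (simp add: mult.assoc)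
  then show "\<exists>c. \<forall>j\<in>C. M d j = c * M a j" by blast
qed

lemma rp_sym:
  assumes "j0 \<in> C" "M b j0 \<noteq> 0" "rows_prop M C a b"
  shows "rows_prop M C b a"
proof -
  obtain c where h: "\<forall>j\<in>C. M b j = c * M a j" using assms(3) unfolding rows_prop_def by blast
  have "c \<noteq> 0" using h assms(1,2) by force
  then have "\<forall>j\<in>C. M a j = inverse c * M b j" using h by (simp add: field_simps)
  then show ?thesis unfolding rows_prop_def by blast
qed

lemma rp_mono: "T \<subseteq> C \<Longrightarrow> rows_prop M C a b \<Longrightarrow> rows_prop M T a b"
  unfolding rows_prop_def by blast

lemma cp_eq: "cols_prop M R j j' = rows_prop (\<lambda>a b. M b a) R j j'"
  unfolding cols_prop_def rows_prop_def by simp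

lemma cp_refl: "cols_prop M R j j"
  unfolding cp_eq by (rule rp_refl)

lemma cp_trans: "cols_prop M R a b \<Longrightarrow> cols_prop M R b d \<Longrightarrow> cols_prop M R a d"
  unfolding cp_eq by (rule rp_trans)

lemma cp_sym: "i0 \<in> R \<Longrightarrow> M i0 b \<noteq> 0 \<Longrightarrow> cols_prop M R a b \<Longrightarrow> cols_prop M R b a"
  unfolding cp_eq by (rule rp_sym[of i0 R "\<lambda>a b. M b a" b a]) auto

lemma extend:
  fixes M :: "nat \<Rightarrow> nat \<Rightarrow> 'a::field"
  assumes nz: "\<forall>i<m. \<forall>j<n. M i j \<noteq> 0" and m1: "1 \<le> m"
    and T: "T \<subseteq> {0..<n}" "card T = k"
      "\<forall>a\<in>T. \<forall>b\<in>T. a \<noteq> b \<longrightarrow> \<not> cols_prop M {0..<m} a b"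
      "\<forall>a<k. \<forall>b<k. a \<noteq> b \<longrightarrow> \<not> rows_prop M T a b"
    and k: "k < m"
    and q: "q < n" "\<forall>t\<in>T. \<not> cols_prop M {0..<m} t q"
    and new: "\<forall>b<k. \<not> rows_prop M (insert q T) b k"
  shows "\<exists>T. T \<subseteq> {0..<n} \<and> card T = Suc k \<and>
      (\<forall>a\<in>T. \<forall>b\<in>T. a \<noteq> b \<longrightarrow> \<not> cols_prop M {0..<m} a b) \<and>
      (\<forall>a<Suc k. \<forall>b<Suc k. a \<noteq> b \<longrightarrow> \<not> rows_prop M T a b)"
proof (intro exI[of _ "insert q T"] conjI)
  have fin: "finite T" using T(1) finite_subset by blast
  have qT: "q \<notin> T" using q(2) cp_refl by blast
  show "insert q T \<subseteq> {0..<n}" using T(1) q(1) by auto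
  show "card (insert q T) = Suc k" using fin qT T(2) by simp
  show "\<forall>a\<in>insert q T. \<forall>b\<in>insert q T. a \<noteq> b \<longrightarrow> \<not> cols_prop M {0..<m} a b"
  proof (intro ballI impI)
    fix a b assume a: "a \<in> insert q T" and b: "b \<in> insert q T" and ab: "a \<noteq> b"
    have b0: "\<And>x. x \<in> insert q T \<Longrightarrow> M 0 x \<noteq> 0" using nz m1 T(1) q(1) by auto
    show "\<not> cols_prop M {0..<m} a b"
    proof
      assume c: "cols_prop M {0..<m} a b"
      show False
      proof (cases "a = q")
        case True
        then have "b \<in> T" using b ab by auto
        moreover have "cols_prop M {0..<m} b a"
          using cp_sym[of 0 "{0..<m}" M b a] c b0[OF b] m1 by auto
        ultimately show False using q(2) True by blast
      next
        case False
        then have aT: "a \<in> T" using a by auto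
        show False
        proof (cases "b = q")
          case True then show False using aT c q(2) by blast
        next
          case False then show False using aT b c ab T(3) by auto
        qed
      qed
    qed
  qed
  show "\<forall>a<Suc k. \<forall>b<Suc k. a \<noteq> b \<longrightarrow> \<not> rows_prop M (insert q T) a b"
  proof (intro allI impI)
    fix a b assume a: "a < Suc k" and b: "b < Suc k" and ab: "a \<noteq> b"
    have qi: "q \<in> insert q T" by simp
    show "\<not> rows_prop M (insert q T) a b"
    proof (cases "a = k")
      case True
      then have "b < k" using b ab by auto
      show ?thesis
      proof
        assume "rows_prop M (insert q T) a b"
        then have "rows_prop M (insert q T) b a"
          using rp_sym[OF qi, of M b a] nz q(1) \<open>b < k\<close> k by auto
        then show False using new True \<open>b < k\<close> by blast
      qed
    next
      case False
      then have "a < k" using a by auto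
      show ?thesis
      proof (cases "b = k")
        case True then show ?thesis using new \<open>a < k\<close> by blast
      next
        case False
        then have "b < k" using b by auto
        then show ?thesis using T(4) \<open>a < k\<close> ab rp_mono[of T "insert q T" M a b] by blast
      qed
    qed
  qed
qed

lemma pigeon:
  fixes M :: "nat \<Rightarrow> nat \<Rightarrow> 'a::field"
  assumes nz: "\<forall>i<m. \<forall>j<n. M i j \<noteq> 0" and m1: "1 \<le> m"
    and W: "W \<subseteq> {0..<n}" "card W = m"
      "\<forall>a\<in>W. \<forall>b\<in>W. a \<noteq> b \<longrightarrow> \<not> cols_prop M {0..<m} a b"
    and T: "T \<subseteq> {0..<n}" "card T = k" and k: "k < m"
  shows "\<exists>q\<in>W. \<forall>t\<in>T. \<not> cols_prop M {0..<m} t q"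
proof (rule ccontr)
  assume "\<not> ?thesis"
  then have h: "\<forall>w\<in>W. \<exists>t\<in>T. cols_prop M {0..<m} t w" by blast
  define f where "f w = (SOME t. t \<in> T \<and> cols_prop M {0..<m} t w)" for w
  have f: "f w \<in> T \<and> cols_prop M {0..<m} (f w) w" if "w \<in> W" for w
    unfolding f_def using someI_ex[OF h[rule_format, OF that, unfolded Bex_def]] .
  have "inj_on f W"
  proof (rule inj_onI)
    fix w w' assume w: "w \<in> W" and w': "w' \<in> W" and e: "f w = f w'"
    have "cols_prop M {0..<m} w (f w)"
      using cp_sym[of 0 "{0..<m}" M w "f w"] f[OF w] m1 nz W(1) w by auto
    moreover have "cols_prop M {0..<m} (f w) w'" using f[OF w'] e by simp
    ultimately have "cols_prop M {0..<m} w w'" by (rule cp_trans)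
    then show "w = w'" using W(3) w w' by blast
  qed
  moreover have "f ` W \<subseteq> T" using f by blast
  moreover have "finite T" using T(1) finite_subset by blast
  ultimately have "card W \<le> card T" by (rule card_inj_on_le)
  then show False using W(2) T(2) k by simp
qed

lemma build:
  fixes M :: "nat \<Rightarrow> nat \<Rightarrow> 'a::field"
  assumes nz: "\<forall>i<m. \<forall>j<n. M i j \<noteq> 0" and m1: "1 \<le> m"
    and rows: "\<forall>i<m. \<forall>i'<m. i \<noteq> i' \<longrightarrow> \<not> rows_prop M {0..<n} i i'"
    and W: "W \<subseteq> {0..<n}" "card W = m"
      "\<forall>a\<in>W. \<forall>b\<in>W. a \<noteq> b \<longrightarrow> \<not> cols_prop M {0..<m} a b"
  shows "k \<le> m \<Longrightarrow> \<exists>T. T \<subseteq> {0..<n} \<and> card T = k \<and>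
      (\<forall>a\<in>T. \<forall>b\<in>T. a \<noteq> b \<longrightarrow> \<not> cols_prop M {0..<m} a b) \<and>
      (\<forall>a<k. \<forall>b<k. a \<noteq> b \<longrightarrow> \<not> rows_prop M T a b)"
proof (induction k)
  case 0
  show ?case by (intro exI[of _ "{}"]) auto
next
  case (Suc k)
  then have k: "k < m" by simp
  then obtain T where T: "T \<subseteq> {0..<n}" "card T = k"
      "\<forall>a\<in>T. \<forall>b\<in>T. a \<noteq> b \<longrightarrow> \<not> cols_prop M {0..<m} a b"
      "\<forall>a<k. \<forall>b<k. a \<noteq> b \<longrightarrow> \<not> rows_prop M T a b"
    using Suc.IH by auto
  show ?case
  proof (cases "\<exists>i<k. rows_prop M T i k")
    case True
    then obtain i where i: "i < k" "rows_prop M T i k" by blast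
    have "T \<noteq> {}" using T(2) i(1) by auto
    then obtain t0 where t0: "t0 \<in> T" by blast
    have t0n: "t0 < n" using t0 T(1) by auto
    have nzi: "M i t0 \<noteq> 0" using nz t0n i k by auto
    have nzk: "M k t0 \<noteq> 0" using nz t0n k by auto
    define c where "c = M k t0 / M i t0"
    obtain c' where c': "\<forall>j\<in>T. M k j = c' * M i j" using i(2) unfolding rows_prop_def by blast
    have "c' = c" using c'[rule_format, OF t0] nzi unfolding c_def by simp
    then have hc: "\<forall>j\<in>T. M k j = c * M i j" using c' by simp
    have "\<not> rows_prop M {0..<n} i k" using rows i k by auto
    then have "\<exists>q\<in>{0..<n}. M k q \<noteq> c * M i q" unfolding rows_prop_def by blast
    then obtain q where q: "q < n" "M k q \<noteq> c * M i q" by auto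
    have qn: "\<forall>t\<in>T. \<not> cols_prop M {0..<m} t q"
    proof (intro ballI notI)
      fix t assume t: "t \<in> T" and "cols_prop M {0..<m} t q"
      then obtain d where d: "\<forall>a\<in>{0..<m}. M a q = d * M a t" unfolding cols_prop_def by blast
      have "M k q = d * M k t" using d k by auto
      also have "\<dots> = c * (d * M i t)" using hc t by (simp add: ac_simps)
      also have "\<dots> = c * M i q" using d i k by auto
      finally show False using q(2) by simp
    qed
    have new: "\<forall>b<k. \<not> rows_prop M (insert q T) b k"
    proof (intro allI impI notI)
      fix b assume b: "b < k" and r: "rows_prop M (insert q T) b k"
      show False
      proof (cases "b = i")
        case True
        obtain e where e: "\<forall>j\<in>insert q T. M k j = e * M i j" using r True unfolding rows_prop_def by blast
        have "e = c" using e t0 nzi unfolding c_def by auto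
        then show False using e q(2) by auto
      next
        case False
        have "rows_prop M T b k" using rp_mono[OF _ r] by blast
        moreover have "rows_prop M T k i" using rp_sym[OF t0, of M k i] nzk i(2) by simp
        ultimately have "rows_prop M T b i" by (rule rp_trans)
        then show False using T(4) b i(1) False by blast
      qed
    qed
    show ?thesis using extend[OF nz m1 T k q(1) qn new] .
  next
    case False
    then have nb: "\<forall>b<k. \<not> rows_prop M T b k" by blast
    obtain q where q: "q \<in> W" "\<forall>t\<in>T. \<not> cols_prop M {0..<m} t q"
      using pigeon[OF nz m1 W T(1,2) k] by blast
    have qn: "q < n" using q W(1) by auto
    have new: "\<forall>b<k. \<not> rows_prop M (insert q T) b k"
      using nb rp_mono[of T "insert q T" M] by blast
    show ?thesis using extend[OF nz m1 T k qn q(2) new] .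
  qed
qed

theorem lemma5p19:
  fixes M :: "nat \<Rightarrow> nat \<Rightarrow> 'a::field" and m n :: nat
  assumes "m < n"
    and "\<forall>i<m. \<forall>j<n. M i j \<noteq> 0"
    and "\<forall>S. S \<subseteq> {0..<n} \<and> card S = m \<longrightarrow> crk M {0..<m} S < m"
  shows "crk M {0..<m} {0..<n} < m"
proof (rule ccontr)
  assume neg: "\<not> ?thesis"
  note nz = assms(2)
  have m1: "1 \<le> m"
  proof (rule ccontr)
    assume "\<not> 1 \<le> m"
    then have "m = 0" by simp
    then show False using assms(3)[rule_format, of "{}"] by simp
  qed
  have rc: "m \<le> row_classes M {0..<m} {0..<n}" and cc: "m \<le> col_classes M {0..<m} {0..<n}"
    using neg unfolding crk_def by auto
  define rcl where "rcl i = {i'\<in>{0..<m}. rows_prop M {0..<n} i i'}" for i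
  have "row_classes M {0..<m} {0..<n} = card (rcl ` {0..<m})"
    unfolding row_classes_def rcl_def Setcompr_eq_image by (rule refl)
  then have "card (rcl ` {0..<m}) = card {0..<m}"
    using rc card_image_le[of "{0..<m}" rcl] by simp
  then have injr: "inj_on rcl {0..<m}" by (rule eq_card_imp_inj_on[OF finite_atLeastLessThan])
  have rows: "\<forall>i<m. \<forall>i'<m. i \<noteq> i' \<longrightarrow> \<not> rows_prop M {0..<n} i i'"
  proof (intro allI impI notI)
    fix i i' assume i: "i < m" and i': "i' < m" and ne: "i \<noteq> i'" and r: "rows_prop M {0..<n} i i'"
    have j0: "0 \<in> {0..<n}" using assms(1) by simp
    have r': "rows_prop M {0..<n} i' i" using rp_sym[OF j0, of M i' i] r nz i' assms(1) by auto
    have "rcl i = rcl i'"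
      unfolding rcl_def using r r' rp_trans by blast
    then show False using injr i i' ne unfolding inj_on_def by auto
  qed
  define ccl where "ccl j = {j'\<in>{0..<n}. cols_prop M {0..<m} j j'}" for j
  have "col_classes M {0..<m} {0..<n} = card (ccl ` {0..<n})"
    unfolding col_classes_def ccl_def Setcompr_eq_image by (rule refl)
  then obtain Z where Z: "Z \<subseteq> ccl ` {0..<n}" "card Z = m" "finite Z"
    using cc obtain_subset_with_card_n by metis
  define rep where "rep X = (SOME j. j \<in> {0..<n} \<and> ccl j = X)" for X
  have rep: "rep X \<in> {0..<n} \<and> ccl (rep X) = X" if "X \<in> Z" for X
  proof -
    have "\<exists>j. j \<in> {0..<n} \<and> ccl j = X" using Z(1) that by blast
    then show ?thesis unfolding rep_def by (rule someI_ex)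
  qed
  have "inj_on rep Z" by (rule inj_onI) (metis rep)
  then have cardW: "card (rep ` Z) = m" using Z(2) card_image by metis
  have Wsub: "rep ` Z \<subseteq> {0..<n}" using rep by auto
  have Wp: "\<forall>a\<in>rep ` Z. \<forall>b\<in>rep ` Z. a \<noteq> b \<longrightarrow> \<not> cols_prop M {0..<m} a b"
  proof (intro ballI impI notI)
    fix a b assume a: "a \<in> rep ` Z" and b: "b \<in> rep ` Z" and ne: "a \<noteq> b"
      and c: "cols_prop M {0..<m} a b"
    have i0: "0 \<in> {0..<m}" using m1 by simp
    have bn: "b < n" using b Wsub by auto
    have c': "cols_prop M {0..<m} b a" using cp_sym[OF i0, of M b a] c nz bn m1 by auto
    have "ccl a = ccl b" unfolding ccl_def using c c' cp_trans by blast
    then show False using a b ne rep by auto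
  qed
  obtain T where T: "T \<subseteq> {0..<n}" "card T = m"
      "\<forall>a\<in>T. \<forall>b\<in>T. a \<noteq> b \<longrightarrow> \<not> cols_prop M {0..<m} a b"
      "\<forall>a<m. \<forall>b<m. a \<noteq> b \<longrightarrow> \<not> rows_prop M T a b"
    using build[OF nz m1 rows Wsub cardW Wp, of m] by auto
  define rclT where "rclT i = {i'\<in>{0..<m}. rows_prop M T i i'}" for i
  have "inj_on rclT {0..<m}"
  proof (rule inj_onI)
    fix a b assume a: "a \<in> {0..<m}" and b: "b \<in> {0..<m}" and e: "rclT a = rclT b"
    have "b \<in> rclT b" unfolding rclT_def using b rp_refl by blast
    then have "rows_prop M T a b" using e unfolding rclT_def by auto
    then show "a = b" using T(4) a b by auto
  qed
  then have r1: "row_classes M {0..<m} T = m"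
    unfolding row_classes_def Setcompr_eq_image rclT_def[symmetric] by (simp add: card_image)
  define cclT where "cclT j = {j'\<in>T. cols_prop M {0..<m} j j'}" for j
  have "inj_on cclT T"
  proof (rule inj_onI)
    fix a b assume a: "a \<in> T" and b: "b \<in> T" and e: "cclT a = cclT b"
    have "b \<in> cclT b" unfolding cclT_def using b cp_refl by blast
    then have "cols_prop M {0..<m} a b" using e unfolding cclT_def by auto
    then show "a = b" using T(3) a b by auto
  qed
  then have c1: "col_classes M {0..<m} T = m"
    unfolding col_classes_def Setcompr_eq_image cclT_def[symmetric] using T(2) by (simp add: card_image)
  have "crk M {0..<m} T = m" unfolding crk_def using r1 c1 by simp
  then show False using assms(3) T(1,2) by auto
qed

end
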